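(* For every temporal oriented tree $\mathcal T$, the connectivity graph $G$ of $\mathcal T$ is weakly chordal, i.e., it contains neither an induced cycle of length at least $5$ nor the complement of such a cycle as an induced subgraph.
   Context: A temporal digraph is a pair $(D,\lambda)$ with $D=(V,A)$ a finite digraph and $\lambda:A\to 2^{\{1,\dots,t_{\max}\}}$ giving the time-steps at which each arc is active. A temporal oriented tree $\mathcal T=(T,\lambda)$ is one whose underlying digraph $T$ is an orientation of a tree. A temporal path is a sequence $(v_1,v_2,t_1),\dots,(v_{k-1},v_k,t_{k-1})$ with pairwise distinct $v_i$, $\overrightarrow{v_iv_{i+1}}\in A$, $t_i\in\lambda(\overrightarrow{v_iv_{i+1}})$ and $t_1<\dots<t_{k-1}$. Two vertices $u\ne v$ are temporally connected if there is a temporal path from $u$ to $v$ or from $v$ to $u$. The connectivity graph of $\mathcal T$ is the undirected graph $G$ with $V(G)=V(T)$ and $uv\in E(G)$ iff $u\neq v$ and $u,v$ are temporally connected. *)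

theory Defs
  imports Main
begin

definition temporal_digraph :: "'a set \<Rightarrow> ('a \<times> 'a) set \<Rightarrow> ('a \<times> 'a \<Rightarrow> nat set) \<Rightarrow> nat \<Rightarrow> bool" where
  "temporal_digraph V A lam tmax \<longleftrightarrow>
     finite V \<and> A \<subseteq> V \<times> V \<and> (\<forall>a\<in>A. lam a \<subseteq> {1..tmax})"

definition und_adj :: "('a \<times> 'a) set \<Rightarrow> 'a \<Rightarrow> 'a \<Rightarrow> bool" where
  "und_adj A u v \<longleftrightarrow> (u, v) \<in> A \<or> (v, u) \<in> A"

definition is_und_tree :: "'a set \<Rightarrow> ('a \<times> 'a) set \<Rightarrow> bool" where
  "is_und_tree V A \<longleftrightarrow>
     V \<noteq> {} \<and>
     (\<forall>u v. und_adj A u v \<longrightarrow> u \<in> V \<and> v \<in> V \<and> u \<noteq> v) \<and>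
     (\<forall>u\<in>V. \<forall>v\<in>V. (u, v) \<in> {(x, y). und_adj A x y}\<^sup>*) \<and>
     \<not> (\<exists>cs. length cs \<ge> 3 \<and> distinct cs \<and>
           (\<forall>i < length cs. und_adj A (cs ! i) (cs ! ((i + 1) mod length cs))))"

definition oriented_tree :: "'a set \<Rightarrow> ('a \<times> 'a) set \<Rightarrow> bool" where
  "oriented_tree V A \<longleftrightarrow> A \<subseteq> V \<times> V \<and> (\<forall>u v. (u, v) \<in> A \<longrightarrow> (v, u) \<notin> A) \<and> is_und_tree V A"

definition temporal_path :: "('a \<times> 'a) set \<Rightarrow> ('a \<times> 'a \<Rightarrow> nat set) \<Rightarrow> 'a list \<Rightarrow> nat list \<Rightarrow> bool" where
  "temporal_path A lam vs ts \<longleftrightarrow>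
     length vs \<ge> 2 \<and> length ts = length vs - 1 \<and> distinct vs \<and>
     (\<forall>i < length ts. (vs ! i, vs ! (i + 1)) \<in> A \<and> ts ! i \<in> lam (vs ! i, vs ! (i + 1))) \<and>
     sorted_wrt (<) ts"

definition temporal_path_from_to :: "('a \<times> 'a) set \<Rightarrow> ('a \<times> 'a \<Rightarrow> nat set) \<Rightarrow> 'a \<Rightarrow> 'a \<Rightarrow> bool" where
  "temporal_path_from_to A lam u v \<longleftrightarrow>
     (\<exists>vs ts. temporal_path A lam vs ts \<and> hd vs = u \<and> last vs = v)"

definition conn_edge :: "'a set \<Rightarrow> ('a \<times> 'a) set \<Rightarrow> ('a \<times> 'a \<Rightarrow> nat set) \<Rightarrow> 'a \<Rightarrow> 'a \<Rightarrow> bool" where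
  "conn_edge V A lam u v \<longleftrightarrow> u \<in> V \<and> v \<in> V \<and> u \<noteq> v \<and>
     (temporal_path_from_to A lam u v \<or> temporal_path_from_to A lam v u)"

definition induced_cycle :: "'a set \<Rightarrow> ('a \<Rightarrow> 'a \<Rightarrow> bool) \<Rightarrow> 'a list \<Rightarrow> bool" where
  "induced_cycle V E cs \<longleftrightarrow> distinct cs \<and> set cs \<subseteq> V \<and>
     (\<forall>i < length cs. \<forall>j < length cs. i \<noteq> j \<longrightarrow>
        (E (cs ! i) (cs ! j) \<longleftrightarrow> j = (i + 1) mod length cs \<or> i = (j + 1) mod length cs))"

definition complement_graph :: "('a \<Rightarrow> 'a \<Rightarrow> bool) \<Rightarrow> 'a \<Rightarrow> 'a \<Rightarrow> bool" where
  "complement_graph E u v \<longleftrightarrow> u \<noteq> v \<and> \<not> E u v"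

definition weakly_chordal :: "'a set \<Rightarrow> ('a \<Rightarrow> 'a \<Rightarrow> bool) \<Rightarrow> bool" where
  "weakly_chordal V E \<longleftrightarrow>
     \<not> (\<exists>cs. length cs \<ge> 5 \<and> induced_cycle V E cs) \<and>
     \<not> (\<exists>cs. length cs \<ge> 5 \<and> induced_cycle V (complement_graph E) cs)"

end

theory Submission
  imports Defs
begin


fun tw :: "('a \<times> 'a) set \<Rightarrow> ('a \<times> 'a \<Rightarrow> nat set) \<Rightarrow> 'a list \<Rightarrow> nat list \<Rightarrow> bool" where
  "tw A lam [v] [] = True"
| "tw A lam (u # v # vs) (t # ts) = ((u,v) \<in> A \<and> t \<in> lam (u,v) \<and> tw A lam (v # vs) ts \<and> (\<forall>s\<in>set ts. t < s))"
| "tw A lam _ _ = False"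

lemma tw_nth: "tw A lam vs ts \<longleftrightarrow> (vs \<noteq> [] \<and> length ts = length vs - 1 \<and>
   (\<forall>i<length ts. (vs!i, vs!Suc i) \<in> A \<and> ts!i \<in> lam (vs!i, vs!Suc i)) \<and> sorted_wrt (<) ts)"
  by (induction A lam vs ts rule: tw.induct) (auto simp: All_less_Suc2)

lemma temporal_path_tw: "temporal_path A lam vs ts \<longleftrightarrow> tw A lam vs ts \<and> distinct vs \<and> length vs \<ge> 2"
  unfolding temporal_path_def tw_nth by auto

lemma tw_dwalk: "tw A lam vs ts \<Longrightarrow> successively (\<lambda>a b. (a,b) \<in> A) vs"
  by (induction A lam vs ts rule: tw.induct) auto

lemma tw_ne: "tw A lam vs ts \<Longrightarrow> vs \<noteq> []"
  by (auto simp: tw_nth)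

lemma tw_take: "tw A lam vs ts \<Longrightarrow> k < length vs \<Longrightarrow> tw A lam (take (Suc k) vs) (take k ts)"
  unfolding tw_nth by (auto simp: min_def nth_take)

lemma tw_drop: "tw A lam vs ts \<Longrightarrow> k < length vs \<Longrightarrow> tw A lam (drop k vs) (drop k ts)"
  unfolding tw_nth by (auto simp: nth_drop)

lemma tw_append: "tw A lam xs ts1 \<Longrightarrow> tw A lam ys ts2 \<Longrightarrow> last xs = hd ys \<Longrightarrow>
   (\<forall>t\<in>set ts1. \<forall>s\<in>set ts2. t < s) \<Longrightarrow> tw A lam (xs @ tl ys) (ts1 @ ts2)"
proof (induction A lam xs ts1 rule: tw.induct)
  case (1 A lam v)
  then show ?case by (cases ys) (auto)
next
  case (2 A lam u v vs t ts)
  then show ?case by auto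
qed auto

lemma path_rtrancl:
  "(u,v) \<in> R\<^sup>* \<Longrightarrow> \<exists>xs. xs \<noteq> [] \<and> hd xs = u \<and> last xs = v \<and> distinct xs \<and> successively (\<lambda>a b. (a,b) \<in> R) xs"
proof (induction rule: rtrancl_induct)
  case base
  then show ?case by (intro exI[of _ "[u]"]) auto
next
  case (step v w)
  then obtain xs where xs: "xs \<noteq> []" "hd xs = u" "last xs = v" "distinct xs" "successively (\<lambda>a b. (a,b) \<in> R) xs" by blast
  show ?case
  proof (cases "w \<in> set xs")
    case True
    then obtain ys zs where yz: "xs = ys @ w # zs" by (meson split_list)
    have "successively (\<lambda>a b. (a,b) \<in> R) (ys @ [w])"
      using xs(5) unfolding yz by (auto simp: successively_append_iff successively_Cons)
    moreover have "hd (ys @ [w]) = u" using xs(2) yz by (cases ys) auto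
    moreover have "distinct (ys @ [w])" using xs(4) yz by auto
    ultimately show ?thesis by (intro exI[of _ "ys @ [w]"]) auto
  next
    case False
    have "successively (\<lambda>a b. (a,b) \<in> R) (xs @ [w])"
      using xs step by (auto simp: successively_append_iff)
    then show ?thesis using xs False by (intro exI[of _ "xs @ [w]"]) auto
  qed
qed

lemma ivt: "\<not> P (f a) \<Longrightarrow> P (f b) \<Longrightarrow> a \<le> b \<Longrightarrow> \<exists>i. a \<le> i \<and> i < b \<and> \<not> P (f i) \<and> P (f (Suc i))"
proof (induction b)
  case 0 then show ?case by auto
next
  case (Suc b)
  show ?case
  proof (cases "P (f b) \<and> a \<le> b")
    case True then show ?thesis using Suc by force
  next
    case False
    then show ?thesis using Suc by (metis le_Suc_eq lessI)
  qed
qed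

lemma distinct_hd_last: "distinct xs \<Longrightarrow> length xs \<ge> 2 \<Longrightarrow> hd xs \<noteq> last xs"
  by (cases xs) auto


locale ttree =
  fixes V :: "'a set" and A :: "('a \<times> 'a) set" and lam :: "'a \<times> 'a \<Rightarrow> nat set"
  assumes AV: "A \<subseteq> V \<times> V"
  and asym: "(u,v) \<in> A \<Longrightarrow> (v,u) \<notin> A"
  and adjne: "und_adj A u v \<Longrightarrow> u \<noteq> v"
  and connV: "u \<in> V \<Longrightarrow> v \<in> V \<Longrightarrow> (u,v) \<in> {(x,y). und_adj A x y}\<^sup>*"
  and nocyc: "\<not> (\<exists>cs. length cs \<ge> 3 \<and> distinct cs \<and>
           (\<forall>i < length cs. und_adj A (cs ! i) (cs ! ((i + 1) mod length cs))))"
begin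

abbreviation "E \<equiv> und_adj A"
abbreviation "reach \<equiv> temporal_path_from_to A lam"
abbreviation "G \<equiv> conn_edge V A lam"

definition side :: "'a \<Rightarrow> 'a \<Rightarrow> 'a set" where
  "side x y = {v. (x,v) \<in> {(a,b). E a b \<and> {a,b} \<noteq> {x,y}}\<^sup>*}"

lemma E_sym: "E u v \<Longrightarrow> E v u" by (auto simp: und_adj_def)

lemma side_self: "x \<in> side x y" by (auto simp: side_def)

lemma side_step: assumes "E u v" "{u,v} \<noteq> {x,y}" "u \<in> side x y" shows "v \<in> side x y"
proof -
  have "(x,u) \<in> {(a,b). E a b \<and> {a,b} \<noteq> {x,y}}\<^sup>*" using assms(3) by (simp add: side_def)
  moreover have "(u,v) \<in> {(a,b). E a b \<and> {a,b} \<noteq> {x,y}}" using assms(1,2) by simp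
  ultimately have "(x,v) \<in> {(a,b). E a b \<and> {a,b} \<noteq> {x,y}}\<^sup>*" by (rule rtrancl_into_rtrancl)
  then show ?thesis by (simp add: side_def)
qed

lemma side_iff: "E u v \<Longrightarrow> {u,v} \<noteq> {x,y} \<Longrightarrow> u \<in> side x y \<longleftrightarrow> v \<in> side x y"
  using side_step[of u v x y] side_step[of v u x y] E_sym[of u v] by (metis insert_commute)

lemma side_other: assumes "E x y" shows "y \<notin> side x y"
proof
  assume "y \<in> side x y"
  then have "(x,y) \<in> {(a,b). E a b \<and> {a,b} \<noteq> {x,y}}\<^sup>*" by (simp add: side_def)
  from path_rtrancl[OF this] obtain xs where xs: "xs \<noteq> []" "hd xs = x" "last xs = y" "distinct xs"
    "successively (\<lambda>a b. (a,b) \<in> {(a,b). E a b \<and> {a,b} \<noteq> {x,y}}) xs"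
    by blast
  have "x \<noteq> y" using assms adjne by auto
  have l2: "length xs \<ge> 2"
  proof (rule ccontr)
    assume "\<not> 2 \<le> length xs"
    moreover have "length xs \<noteq> 0" using xs(1) by simp
    ultimately have "length xs = 1" by linarith
    then have "hd xs = last xs" by (cases xs) auto
    then show False using xs \<open>x \<noteq> y\<close> by simp
  qed
  have l3: "length xs \<ge> 3"
  proof (rule ccontr)
    assume "\<not> 3 \<le> length xs"
    then have "length xs = 2" using l2 by auto
    then have "Suc 0 < length xs" by simp
    from successively_nth[OF xs(5) this] have "{xs!0, xs!1} \<noteq> {x,y}" by simp
    moreover have "xs!0 = x" using xs by (simp add: hd_conv_nth)
    moreover have "xs!1 = y" using xs \<open>length xs = 2\<close> by (simp add: last_conv_nth)
    ultimately show False by simp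
  qed
  have "\<forall>i < length xs. E (xs ! i) (xs ! ((i + 1) mod length xs))"
  proof (intro allI impI)
    fix i assume i: "i < length xs"
    show "E (xs ! i) (xs ! ((i + 1) mod length xs))"
    proof (cases "Suc i < length xs")
      case True
      then show ?thesis using successively_nth[OF xs(5) True] by simp
    next
      case False
      then have ii: "i = length xs - 1" using i by simp
      then have "xs ! i = y" using xs by (simp add: last_conv_nth)
      moreover have "i + 1 = length xs" using ii l2 by simp
      then have "(i + 1) mod length xs = 0" by simp
      moreover have "xs ! 0 = x" using xs by (simp add: hd_conv_nth)
      ultimately show ?thesis using assms E_sym by simp
    qed
  qed
  then show False using nocyc l3 xs(4) by blast
qed

lemma cross: "E x y \<Longrightarrow> E u v \<Longrightarrow> u \<in> side x y \<Longrightarrow> v \<notin> side x y \<Longrightarrow> u = x \<and> v = y"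
proof -
  assume a: "E x y" "E u v" "u \<in> side x y" "v \<notin> side x y"
  then have "{u,v} = {x,y}" using side_iff by blast
  then have "(u = x \<and> v = y) \<or> (u = y \<and> v = x)" by (auto simp: doubleton_eq_iff)
  then show ?thesis using a side_other by auto
qed

lemma walk_both_sides:
  assumes "successively E ws" "q < length ws" "r < length ws" "ws!q \<in> side x y" "ws!r \<notin> side x y" "E x y"
  shows "x \<in> set ws \<and> y \<in> set ws"
proof (cases "q < r")
  case True
  from ivt[of "\<lambda>v. v \<notin> side x y" "(!) ws" q r] True assms
  obtain i where i: "q \<le> i" "i < r" "ws!i \<in> side x y" "ws!Suc i \<notin> side x y" by auto
  have "E (ws!i) (ws!Suc i)" using successively_nth[OF assms(1)] i assms(3) by auto
  then have "ws!i = x \<and> ws!Suc i = y" using cross assms(6) i by blast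
  then show ?thesis using i assms(3) by (metis Suc_lessI le_less_trans nth_mem order.strict_trans)
next
  case False
  then have "r < q" using assms by (metis linorder_neqE_nat)
  from ivt[of "\<lambda>v. v \<in> side x y" "(!) ws" r q] this assms
  obtain i where i: "r \<le> i" "i < q" "ws!i \<notin> side x y" "ws!Suc i \<in> side x y" by auto
  have "E (ws!i) (ws!Suc i)" using successively_nth[OF assms(1)] i assms(2) by auto
  then have "E (ws!Suc i) (ws!i)" by (rule E_sym)
  then have "ws!Suc i = x \<and> ws!i = y" using cross assms(6) i by blast
  then show ?thesis using i assms(2) by (metis Suc_lessI le_less_trans nth_mem order.strict_trans)
qed

lemma dwalk_E: "successively (\<lambda>a b. (a,b) \<in> A) ws \<Longrightarrow> successively E ws"
  by (erule successively_mono) (auto simp: und_adj_def)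

lemma no_back:
  assumes "(x,y) \<in> A" "successively (\<lambda>a b. (a,b) \<in> A) ws" "ws \<noteq> []" "hd ws = y" "last ws = x"
  shows False
proof -
  have Exy: "E x y" using assms by (auto simp: und_adj_def)
  have "\<not> ws!0 \<in> side x y" using assms side_other[OF Exy] by (auto simp: hd_conv_nth)
  moreover have "ws!(length ws - 1) \<in> side x y" using assms side_self by (auto simp: last_conv_nth)
  ultimately obtain i where i: "i < length ws - 1" "ws!i \<notin> side x y" "ws!Suc i \<in> side x y"
    using ivt[of "\<lambda>v. v \<in> side x y" "(!) ws" 0 "length ws - 1"] by auto
  have arc: "(ws!i, ws!Suc i) \<in> A" using successively_nth[OF assms(2)] i by auto
  then have "E (ws!Suc i) (ws!i)" by (auto simp: und_adj_def)
  then have "ws!Suc i = x \<and> ws!i = y" using cross Exy i by blast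
  then show False using arc asym assms(1) by auto
qed

lemma dwalk_distinct: "successively (\<lambda>a b. (a,b) \<in> A) ws \<Longrightarrow> distinct ws"
proof (induction ws)
  case Nil then show ?case by simp
next
  case (Cons a ws)
  show ?case
  proof (cases ws)
    case Nil then show ?thesis by simp
  next
    case (Cons b rest)
    have ab: "(a,b) \<in> A" and sw: "successively (\<lambda>a b. (a,b) \<in> A) ws"
      using Cons.prems Cons by auto
    have "a \<notin> set ws"
    proof
      assume "a \<in> set ws"
      then obtain ys zs where yz: "ws = ys @ a # zs" by (meson split_list)
      have s2: "successively (\<lambda>a b. (a,b) \<in> A) (ys @ [a])"
        using sw unfolding yz by (auto simp: successively_append_iff successively_Cons)
      show False
      proof (cases ys)
        case Nil then show False using yz Cons ab asym by auto
      next
        case (Cons c cs)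
        then show False using no_back[OF ab s2] yz \<open>ws = b # rest\<close> by auto
      qed
    qed
    then show ?thesis using Cons.IH sw by auto
  qed
qed

lemma tw_set_V: "tw A lam vs ts \<Longrightarrow> length vs \<ge> 2 \<Longrightarrow> set vs \<subseteq> V"
proof -
  assume a: "tw A lam vs ts" "length vs \<ge> 2"
  show "set vs \<subseteq> V"
  proof
    fix v assume "v \<in> set vs"
    then obtain k where k: "k < length vs" "vs!k = v" by (auto simp: in_set_conv_nth)
    show "v \<in> V"
    proof (cases "k < length vs - 1")
      case True
      then have "(vs!k, vs!Suc k) \<in> A" using a unfolding tw_nth by auto
      then show ?thesis using AV k by auto
    next
      case False
      then have "k = Suc (k - 1)" "k - 1 < length ts" using k a unfolding tw_nth by auto
      then have "(vs!(k-1), vs!k) \<in> A" using a unfolding tw_nth by (metis)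
      then show ?thesis using AV k by auto
    qed
  qed
qed


lemma tw_reach: "tw A lam vs ts \<Longrightarrow> length vs \<ge> 2 \<Longrightarrow> reach (hd vs) (last vs)"
  unfolding temporal_path_from_to_def temporal_path_tw using tw_dwalk dwalk_distinct by blast

lemma reach_tw: "reach u v \<Longrightarrow> \<exists>vs ts. tw A lam vs ts \<and> hd vs = u \<and> last vs = v \<and> distinct vs \<and> length vs \<ge> 2"
  unfolding temporal_path_from_to_def temporal_path_tw by blast

lemma reach_ne: "reach u v \<Longrightarrow> u \<noteq> v" by (metis reach_tw distinct_hd_last)

lemma reach_V: "reach u v \<Longrightarrow> u \<in> V \<and> v \<in> V"
proof -
  assume "reach u v"
  then obtain vs ts where h: "tw A lam vs ts" "hd vs = u" "last vs = v" "length vs \<ge> 2"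
    using reach_tw by blast
  then have "set vs \<subseteq> V" using tw_set_V by blast
  moreover have "vs \<noteq> []" using h by auto
  ultimately show ?thesis using h by auto
qed

lemma G_iff: "G u v \<longleftrightarrow> reach u v \<or> reach v u"
  unfolding conn_edge_def using reach_V reach_ne by blast

lemma G_sym: "G u v \<Longrightarrow> G v u" using G_iff by blast

lemma reach_asym: assumes "reach u v" "reach v u" shows False
proof -
  obtain vs1 ts1 where h1: "tw A lam vs1 ts1" "hd vs1 = u" "last vs1 = v" "length vs1 \<ge> 2"
    using reach_tw assms(1) by blast
  obtain vs2 ts2 where h2: "tw A lam vs2 ts2" "hd vs2 = v" "last vs2 = u" "length vs2 \<ge> 2"
    using reach_tw assms(2) by blast
  obtain rest where r0: "vs2 = v # rest" using h2 by (cases vs2) auto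
  have r: "vs2 = v # rest" "rest \<noteq> []" using r0 h2 by auto
  have s2: "successively (\<lambda>a b. (a,b) \<in> A) vs2" using tw_dwalk h2 by blast
  then have "successively (\<lambda>a b. (a,b) \<in> A) rest" "(v, hd rest) \<in> A" using r
    by (auto simp: successively_Cons)
  moreover have "successively (\<lambda>a b. (a,b) \<in> A) vs1" using tw_dwalk h1 by blast
  ultimately have "successively (\<lambda>a b. (a,b) \<in> A) (vs1 @ rest)" using h1 r
    by (auto simp: successively_append_iff)
  then have "distinct (vs1 @ rest)" by (rule dwalk_distinct)
  moreover have "length (vs1 @ rest) \<ge> 2" using h1 by simp
  moreover have "hd (vs1 @ rest) = u" using h1 by (cases vs1) auto
  moreover have "last (vs1 @ rest) = u" using h2 r by auto
  ultimately show False using distinct_hd_last by metis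
qed

lemma P1:
  assumes "tw A lam vs ts" "distinct vs" "a \<in> set vs" "a \<noteq> hd vs" "a \<noteq> last vs"
  shows "reach (hd vs) a \<and> reach a (last vs)"
proof -
  obtain k where k: "k < length vs" "vs!k = a" using assms(3) by (auto simp: in_set_conv_nth)
  have ne: "vs \<noteq> []" using k by auto
  have k0: "k \<noteq> 0" using k assms(4) ne by (cases k) (auto simp: hd_conv_nth)
  have kl: "k \<noteq> length vs - 1" using k assms(5) ne by (auto simp: last_conv_nth)
  have t1: "tw A lam (take (Suc k) vs) (take k ts)" using tw_take assms(1) k by blast
  have "length (take (Suc k) vs) \<ge> 2" using k k0 by simp
  moreover have "hd (take (Suc k) vs) = hd vs" by simp
  moreover have "last (take (Suc k) vs) = a" using k by (simp add: take_Suc_conv_app_nth)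
  ultimately have "reach (hd vs) a" using tw_reach[OF t1] by metis
  moreover
  have t2: "tw A lam (drop k vs) (drop k ts)" using tw_drop assms(1) k by blast
  have "length (drop k vs) \<ge> 2" using k kl by simp
  from tw_reach[OF t2 this] have "reach a (last vs)"
    using k by (simp add: hd_drop_conv_nth)
  ultimately show ?thesis by blast
qed

lemma P1G:
  assumes "tw A lam vs ts" "distinct vs" "a \<in> set vs" "a \<noteq> hd vs" "a \<noteq> last vs"
  shows "G (hd vs) a \<and> G a (last vs)"
  using P1[OF assms] G_iff by blast

lemma join:
  assumes "tw A lam vs1 ts1" "tw A lam vs2 ts2" "i < length vs1" "Suc j < length vs2" "vs1!i = vs2!j"
    "\<forall>t\<in>set (take i ts1). \<forall>s\<in>set (drop j ts2). t < s"
  shows "reach (hd vs1) (last vs2)"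
proof -
  have t1: "tw A lam (take (Suc i) vs1) (take i ts1)" using tw_take assms by blast
  have t2: "tw A lam (drop j vs2) (drop j ts2)" using tw_drop[OF assms(2)] assms(4) by simp
  have "last (take (Suc i) vs1) = hd (drop j vs2)"
    using assms by (simp add: take_Suc_conv_app_nth hd_drop_conv_nth)
  from tw_append[OF t1 t2 this assms(6)]
  have tw3: "tw A lam (take (Suc i) vs1 @ tl (drop j vs2)) (take i ts1 @ drop j ts2)" .
  have tl: "tl (drop j vs2) = drop (Suc j) vs2" by (simp add: drop_Suc tl_drop)
  have "length (take (Suc i) vs1 @ tl (drop j vs2)) \<ge> 2" using assms tl by simp
  moreover have "hd (take (Suc i) vs1 @ tl (drop j vs2)) = hd vs1" using assms(3) by (cases vs1) auto
  moreover have "last (take (Suc i) vs1 @ tl (drop j vs2)) = last vs2" using assms tl by simp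
  ultimately show ?thesis using tw_reach[OF tw3] by metis
qed

lemma sorted_sep:
  assumes "sorted_wrt (<) xs" "sorted_wrt (<) ys" "0 < i" "i \<le> length xs" "j < length ys"
    "xs!(i-1) < ys!j"
  shows "\<forall>t\<in>set (take i xs). \<forall>s\<in>set (drop j ys). (t::nat) < s"
proof (intro ballI)
  fix t s assume t: "t \<in> set (take i xs)" and s: "s \<in> set (drop j ys)"
  obtain k where k: "k < i" "t = xs!k" using t assms(4) by (auto simp: in_set_conv_nth)
  obtain l where l: "l < length ys - j" "s = ys!(j+l)" using s assms(5) by (auto simp: in_set_conv_nth)
  have "t \<le> xs!(i-1)"
  proof (cases "k = i - 1")
    case True then show ?thesis using k by simp
  next
    case False
    then have "k < i - 1" using k by linarith
    moreover have "i - 1 < length xs" using assms(3,4) by linarith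
    ultimately show ?thesis using sorted_wrt_nth_less[OF assms(1), of k "i-1"] k by simp
  qed
  moreover have "ys!j \<le> s"
  proof (cases "l = 0")
    case True then show ?thesis using l by simp
  next
    case False
    then have "j + l < length ys" "j < j + l" using l by auto
    then show ?thesis using sorted_wrt_nth_less[OF assms(2), of j "j+l"] l by simp
  qed
  ultimately show "t < s" using assms(6) by linarith
qed

lemma splice:
  assumes "tw A lam vs1 ts1" "tw A lam vs2 ts2" "Suc i < length vs1" "Suc j < length vs2" "vs1!i = vs2!j"
  shows "reach (hd vs1) (last vs2) \<or> reach (hd vs2) (last vs1)"
proof -
  have n1: "length ts1 = length vs1 - 1" "sorted_wrt (<) ts1" using assms(1) by (auto simp: tw_nth)
  have n2: "length ts2 = length vs2 - 1" "sorted_wrt (<) ts2" using assms(2) by (auto simp: tw_nth)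
  have il: "i < length vs1" "i < length ts1" "i \<le> length ts1" using assms(3) n1 by auto
  have jl: "j < length vs2" "j < length ts2" "j \<le> length ts2" using assms(4) n2 by auto
  show ?thesis
  proof (cases "i = 0 \<or> j = 0")
    case True
    then show ?thesis
    proof
      assume "i = 0"
      then have "\<forall>t\<in>set (take i ts1). \<forall>s\<in>set (drop j ts2). t < s" by simp
      then show ?thesis using join[OF assms(1,2) il(1) assms(4,5)] by simp
    next
      assume "j = 0"
      then have "\<forall>t\<in>set (take j ts2). \<forall>s\<in>set (drop i ts1). t < s" by simp
      then show ?thesis using join[OF assms(2,1) jl(1) assms(3) assms(5)[symmetric]] by simp
    qed
  next
    case False
    then have i0: "0 < i" and j0: "0 < j" by auto
    show ?thesis
    proof (cases "ts1!(i-1) < ts2!j")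
      case True
      have "\<forall>t\<in>set (take i ts1). \<forall>s\<in>set (drop j ts2). t < s"
        by (rule sorted_sep[OF n1(2) n2(2) i0 il(3) jl(2) True])
      then show ?thesis using join[OF assms(1,2) il(1) assms(4,5)] by simp
    next
      case c2: False
      have "j - 1 < j" using j0 by simp
      then have "ts2!(j-1) < ts2!j" using sorted_wrt_nth_less[OF n2(2)] jl(2) by blast
      moreover have "i - 1 < i" using i0 by simp
      then have "ts1!(i-1) < ts1!i" using sorted_wrt_nth_less[OF n1(2)] il(2) by blast
      ultimately have lt: "ts2!(j-1) < ts1!i" using c2 by linarith
      have "\<forall>t\<in>set (take j ts2). \<forall>s\<in>set (drop i ts1). t < s"
        by (rule sorted_sep[OF n2(2) n1(2) j0 jl(3) il(2) lt])
      then show ?thesis using join[OF assms(2,1) jl(1) assms(3) assms(5)[symmetric]] by simp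
    qed
  qed
qed

lemma G_path: "G u v \<Longrightarrow> \<exists>vs ts. tw A lam vs ts \<and> distinct vs \<and> length vs \<ge> 2 \<and>
   ((hd vs = u \<and> last vs = v) \<or> (hd vs = v \<and> last vs = u))"
  using G_iff reach_tw by metis


lemma succ_take: "successively P xs \<Longrightarrow> successively P (take n xs)"
  by (metis append_take_drop_id successively_append_iff)

lemma succ_drop: "successively P xs \<Longrightarrow> successively P (drop n xs)"
  by (metis append_take_drop_id successively_append_iff)

lemma same_side:
  assumes "successively E ws" "E x y" "\<not> (x \<in> set ws \<and> y \<in> set ws)" "a \<in> set ws" "b \<in> set ws"
  shows "a \<in> side x y \<longleftrightarrow> b \<in> side x y"
proof -
  obtain q where q: "q < length ws" "ws!q = a" using assms(4) by (auto simp: in_set_conv_nth)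
  obtain r where r: "r < length ws" "ws!r = b" using assms(5) by (auto simp: in_set_conv_nth)
  show ?thesis
  proof (rule ccontr)
    assume "\<not> (a \<in> side x y \<longleftrightarrow> b \<in> side x y)"
    then have "(ws!q \<in> side x y \<and> ws!r \<notin> side x y) \<or> (ws!r \<in> side x y \<and> ws!q \<notin> side x y)"
      using q r by auto
    then show False
      using walk_both_sides[OF assms(1) q(1) r(1) _ _ assms(2)] walk_both_sides[OF assms(1) r(1) q(1) _ _ assms(2)]
        assms(3) by blast
  qed
qed

lemma tw_Ewalk: "tw A lam vs ts \<Longrightarrow> successively E vs"
  using tw_dwalk dwalk_E by blast

lemma LB:
  assumes Gab: "G a b" and Gad: "G a d" and z0: "z 0 = b" and zk: "z k = d"
    and zG: "\<forall>t<k. G (z t) (z (Suc t))" and za: "\<forall>t\<le>k. z t \<noteq> a"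
    and zn: "\<forall>t<k. \<not> (G a (z t) \<and> G a (z (Suc t)))" and rab: "reach a b"
  shows "reach a d"
proof -
  obtain vs ts where h: "tw A lam vs ts" "hd vs = a" "last vs = b" "distinct vs" "length vs \<ge> 2"
    using reach_tw rab by blast
  obtain rest where vr: "vs = a # rest" using h by (cases vs) auto
  have rne: "rest \<noteq> []" using vr h by auto
  define w where "w = hd rest"
  have arc: "(a, w) \<in> A" using tw_dwalk[OF h(1)] vr rne by (auto simp: successively_Cons w_def)
  then have Eaw: "E a w" by (auto simp: und_adj_def)
  have wS: "w \<notin> side a w" using side_other[OF Eaw] .
  have aS: "a \<in> side a w" using side_self .
  have swr: "successively E rest" using tw_Ewalk[OF h(1)] vr by (auto simp: successively_Cons)
  have anr: "a \<notin> set rest" using h(4) vr by auto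
  have bS: "b \<notin> side a w"
  proof -
    have "w \<in> set rest" "b \<in> set rest" using rne h(3) vr w_def by auto
    then show ?thesis using same_side[OF swr Eaw] anr wS by blast
  qed
  have dS: "d \<notin> side a w"
  proof
    assume dS: "d \<in> side a w"
    obtain t where t: "t < k" "z t \<notin> side a w" "z (Suc t) \<in> side a w"
      using ivt[of "\<lambda>v. v \<in> side a w" z 0 k] z0 zk bS dS by auto
    obtain vs' ts' where h': "tw A lam vs' ts'" "distinct vs'" "length vs' \<ge> 2"
      "(hd vs' = z t \<and> last vs' = z (Suc t)) \<or> (hd vs' = z (Suc t) \<and> last vs' = z t)"
      using G_path zG t(1) by blast
    have ne': "vs' \<noteq> []" using h' by auto
    have "hd vs' \<in> set vs'" "last vs' \<in> set vs'" using ne' by auto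
    then have zin: "z t \<in> set vs'" "z (Suc t) \<in> set vs'" using h'(4) by auto
    have "a \<in> set vs' \<and> w \<in> set vs'"
    proof (rule ccontr)
      assume nn: "\<not> (a \<in> set vs' \<and> w \<in> set vs')"
      from same_side[OF tw_Ewalk[OF h'(1)] Eaw nn zin] show False using t by simp
    qed
    then have ain: "a \<in> set vs'" by blast
    have "z t \<noteq> a" "z (Suc t) \<noteq> a" using za t by auto
    then have "a \<noteq> hd vs'" "a \<noteq> last vs'" using h'(4) by auto
    from P1G[OF h'(1,2) ain this] have "G (hd vs') a" "G a (last vs')" by auto
    then have "G a (hd vs')" "G a (last vs')" using G_sym by auto
    then have "G a (z t) \<and> G a (z (Suc t))" using h'(4) by auto
    then show False using zn t by blast
  qed
  show ?thesis
  proof (rule ccontr)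
    assume "\<not> reach a d"
    then have "reach d a" using Gad G_iff by blast
    then obtain us ss where g: "tw A lam us ss" "hd us = d" "last us = a" "length us \<ge> 2"
      using reach_tw by blast
    have ne: "us \<noteq> []" using g by auto
    have "\<not> us!0 \<in> side a w" using g dS ne by (simp add: hd_conv_nth)
    moreover have "us!(length us - 1) \<in> side a w" using g aS ne by (simp add: last_conv_nth)
    ultimately obtain i where i: "i < length us - 1" "us!i \<notin> side a w" "us!Suc i \<in> side a w"
      using ivt[of "\<lambda>v. v \<in> side a w" "(!) us" 0 "length us - 1"] by auto
    have arc2: "(us!i, us!Suc i) \<in> A" using successively_nth[OF tw_dwalk[OF g(1)]] i by auto
    then have "E (us!Suc i) (us!i)" by (auto simp: und_adj_def)
    then have "us!Suc i = a \<and> us!i = w" using cross[OF Eaw] i by blast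
    then show False using arc2 arc asym by auto
  qed
qed

end



lemma mod_cancel:
  fixes k a b n :: nat
  assumes "(k + a) mod n = (k + b) mod n" "a < n" "b < n"
  shows "a = b"
proof -
  have n0: "0 < n" using assms by auto
  define r where "r = k mod n"
  have r: "r < n" using n0 by (simp add: r_def)
  have e: "(r + a) mod n = (r + b) mod n" using assms(1) by (simp add: r_def mod_add_left_eq)
  have m: "\<And>x. x < n \<Longrightarrow> (r + x) mod n = (if r + x < n then r + x else r + x - n)"
  proof -
    fix x assume "x < n"
    show "(r + x) mod n = (if r + x < n then r + x else r + x - n)"
    proof (cases "r + x < n")
      case True then show ?thesis by simp
    next
      case False
      then have "r + x - n < n" using r \<open>x < n\<close> by linarith
      then show ?thesis using False by (simp add: mod_if)
    qed
  qed
  show ?thesis using e m[OF assms(2)] m[OF assms(3)] assms(2,3) r by (auto split: if_splits)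
qed

lemma ic_adj:
  assumes "induced_cycle V R cs" "i < length cs" "j < length cs" "i \<noteq> j"
  shows "R (cs!i) (cs!j) \<longleftrightarrow> j = (i+1) mod length cs \<or> i = (j+1) mod length cs"
  using assms unfolding induced_cycle_def by blast

lemma suc_mod: "i < n \<Longrightarrow> (i + 1) mod (n::nat) = (if i + 1 = n then 0 else i + 1)"
  by auto

lemma ic_adj':
  assumes "induced_cycle V R cs" "i < length cs" "j < length cs" "i \<noteq> j"
  shows "R (cs!i) (cs!j) \<longleftrightarrow> j = (if i + 1 = length cs then 0 else i + 1) \<or> i = (if j + 1 = length cs then 0 else j + 1)"
  using ic_adj[OF assms] suc_mod[OF assms(2)] suc_mod[OF assms(3)] by simp

lemma rot_ic:
  assumes "induced_cycle V R cs"
  shows "induced_cycle V R (rotate k cs)"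
proof -
  let ?n = "length cs"
  have d: "distinct cs" "set cs \<subseteq> V" using assms by (auto simp: induced_cycle_def)
  have key: "\<And>i j. i < ?n \<Longrightarrow> j < ?n \<Longrightarrow> ((k + j) mod ?n = ((k + i) mod ?n + 1) mod ?n \<longleftrightarrow> j = (i + 1) mod ?n)"
  proof -
    fix i j assume ij: "i < ?n" "j < ?n"
    have "((k + i) mod ?n + 1) mod ?n = (k + (i + 1)) mod ?n" by (simp add: mod_Suc_eq)
    also have "\<dots> = (k + (i+1) mod ?n) mod ?n" by (simp add: mod_add_right_eq)
    finally have e: "((k + i) mod ?n + 1) mod ?n = (k + (i+1) mod ?n) mod ?n" .
    have "0 < ?n" using ij by linarith
    then have "(i+1) mod ?n < ?n" by (rule mod_less_divisor)
    then show "(k + j) mod ?n = ((k + i) mod ?n + 1) mod ?n \<longleftrightarrow> j = (i + 1) mod ?n"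
      using e mod_cancel[of k j ?n "(i+1) mod ?n"] ij by (auto simp: mod_add_right_eq)
  qed
  show ?thesis unfolding induced_cycle_def
  proof (intro conjI allI impI)
    show "distinct (rotate k cs)" using d by simp
    show "set (rotate k cs) \<subseteq> V" using d by simp
    fix i j assume ij: "i < length (rotate k cs)" "j < length (rotate k cs)" "i \<noteq> j"
    then have ij': "i < ?n" "j < ?n" by auto
    have n0: "0 < ?n" using ij' by auto
    have i'n: "(k+i) mod ?n < ?n" "(k+j) mod ?n < ?n" using n0 by auto
    have ne: "(k+i) mod ?n \<noteq> (k+j) mod ?n" using mod_cancel[of k i ?n j] ij' ij(3) by auto
    have "R (cs!((k+i) mod ?n)) (cs!((k+j) mod ?n)) \<longleftrightarrow>
      (k+j) mod ?n = ((k+i) mod ?n + 1) mod ?n \<or> (k+i) mod ?n = ((k+j) mod ?n + 1) mod ?n"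
      using ic_adj[OF assms i'n ne] .
    then show "R (rotate k cs ! i) (rotate k cs ! j) \<longleftrightarrow>
          j = (i + 1) mod length (rotate k cs) \<or> i = (j + 1) mod length (rotate k cs)"
      using key[OF ij'(1,2)] key[OF ij'(2,1)] ij' by (simp add: nth_rotate)
  qed
qed

context ttree begin

lemma reach_xor: "G u v \<Longrightarrow> reach u v \<longleftrightarrow> \<not> reach v u"
  using G_iff reach_asym by blast

lemma LB4:
  assumes "G a b" "G a d" "G b v" "G v d" "\<not> G a v" "v \<noteq> a" "b \<noteq> a" "d \<noteq> a"
  shows "reach a b \<longleftrightarrow> reach a d"
proof
  define z :: "nat \<Rightarrow> 'a" where "z = (\<lambda>t. if t = 0 then b else if t = 1 then v else d)"
  assume "reach a b"
  show "reach a d"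
  proof (rule LB[OF assms(1,2), of z 2])
    show "z 0 = b" "z 2 = d" by (auto simp: z_def)
    show "\<forall>t<2. G (z t) (z (Suc t))" using assms by (auto simp: z_def less_2_cases_iff)
    show "\<forall>t\<le>2. z t \<noteq> a" using assms by (auto simp: z_def le_Suc_eq)
    show "\<forall>t<2. \<not> (G a (z t) \<and> G a (z (Suc t)))" using assms by (auto simp: z_def less_2_cases_iff)
  qed fact
next
  define z :: "nat \<Rightarrow> 'a" where "z = (\<lambda>t. if t = 0 then d else if t = 1 then v else b)"
  assume "reach a d"
  show "reach a b"
  proof (rule LB[OF assms(2,1), of z 2])
    show "z 0 = d" "z 2 = b" by (auto simp: z_def)
    show "\<forall>t<2. G (z t) (z (Suc t))" using assms G_sym by (auto simp: z_def less_2_cases_iff)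
    show "\<forall>t\<le>2. z t \<noteq> a" using assms by (auto simp: z_def le_Suc_eq)
    show "\<forall>t<2. \<not> (G a (z t) \<and> G a (z (Suc t)))" using assms by (auto simp: z_def less_2_cases_iff)
  qed fact
qed


lemma adj0:
  assumes "induced_cycle V G cs" "j < length cs" "0 < j"
  shows "G (cs!0) (cs!j) \<longleftrightarrow> j = 1 \<or> j = length cs - 1"
proof -
  have "0 < length cs" using assms by linarith
  from ic_adj'[OF assms(1) this assms(2)] assms show ?thesis by auto
qed

lemma adjS:
  assumes "induced_cycle V G cs" "Suc j < length cs"
  shows "G (cs!j) (cs!Suc j)"
proof -
  have "j < length cs" using assms by linarith
  from ic_adj'[OF assms(1) this assms(2)] assms show ?thesis by auto
qed

lemma LB0:
  assumes ic: "induced_cycle V G cs" and n4: "length cs \<ge> 4"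
  shows "reach (cs!0) (cs!1) \<longleftrightarrow> reach (cs!0) (cs!(length cs - 1))"
proof -
  let ?n = "length cs"
  have dis: "distinct cs" using ic by (simp add: induced_cycle_def)
  have G01: "G (cs!0) (cs!1)" using adj0[OF ic, of 1] n4 by auto
  have G0n: "G (cs!0) (cs!(?n - 1))" using adj0[OF ic, of "?n - 1"] n4 by auto
  have ne0: "\<And>j. 0 < j \<Longrightarrow> j < ?n \<Longrightarrow> cs!j \<noteq> cs!0"
    using nth_eq_iff_index_eq[OF dis] n4 by fastforce
  show ?thesis
  proof
    assume r: "reach (cs!0) (cs!1)"
    show "reach (cs!0) (cs!(?n - 1))"
    proof (rule LB[OF G01 G0n, of "\<lambda>t. cs!(Suc t)" "?n - 2"])
      show "cs!(Suc 0) = cs!1" by simp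
      show "cs!(Suc (?n - 2)) = cs!(?n - 1)" using n4 by (simp add: Suc_diff_Suc numeral_2_eq_2)
      show "\<forall>t<?n - 2. G (cs!Suc t) (cs!Suc (Suc t))" using adjS[OF ic] by auto
      show "\<forall>t\<le>?n - 2. cs!Suc t \<noteq> cs!0" using ne0 n4 by auto
      show "\<forall>t<?n - 2. \<not> (G (cs!0) (cs!Suc t) \<and> G (cs!0) (cs!Suc (Suc t)))"
        using adj0[OF ic] n4 by auto
    qed (rule r)
  next
    assume r: "reach (cs!0) (cs!(?n - 1))"
    show "reach (cs!0) (cs!1)"
    proof (rule LB[OF G0n G01, of "\<lambda>t. cs!(?n - 1 - t)" "?n - 2"])
      show "cs!(?n - 1 - 0) = cs!(?n - 1)" by simp
      show "cs!(?n - 1 - (?n - 2)) = cs!1" using n4 by (simp add: numeral_2_eq_2)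
      show "\<forall>t<?n - 2. G (cs!(?n - 1 - t)) (cs!(?n - 1 - Suc t))"
      proof (intro allI impI)
        fix t assume "t < ?n - 2"
        then have "Suc (?n - 1 - Suc t) < ?n" "Suc (?n - 1 - Suc t) = ?n - 1 - t" by auto
        then show "G (cs!(?n - 1 - t)) (cs!(?n - 1 - Suc t))" using adjS[OF ic, of "?n - 1 - Suc t"] G_sym by metis
      qed
      show "\<forall>t\<le>?n - 2. cs!(?n - 1 - t) \<noteq> cs!0" using ne0 n4 by auto
      show "\<forall>t<?n - 2. \<not> (G (cs!0) (cs!(?n - 1 - t)) \<and> G (cs!0) (cs!(?n - 1 - Suc t)))"
        using adj0[OF ic] n4 by auto
    qed (rule r)
  qed
qed

lemma cycle_even:
  assumes ic: "induced_cycle V G cs" and n4: "length cs \<ge> 4"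
  shows "even (length cs)"
proof -
  let ?n = "length cs"
  define \<tau> where "\<tau> i = reach (cs!i) (cs!((i+1) mod ?n))" for i
  have rot: "\<And>i. i < ?n \<Longrightarrow> \<tau> i \<longleftrightarrow> reach (cs!i) (cs!((i + (?n - 1)) mod ?n))"
  proof -
    fix i assume i: "i < ?n"
    have ic2: "induced_cycle V G (rotate i cs)" by (rule rot_ic[OF ic])
    have l: "length (rotate i cs) = ?n" by simp
    from LB0[OF ic2] n4 have "reach (rotate i cs ! 0) (rotate i cs ! 1) \<longleftrightarrow> reach (rotate i cs ! 0) (rotate i cs ! (?n - 1))"
      by simp
    moreover have "cs \<noteq> []" using i by (cases cs) auto
    then have "rotate i cs ! 0 = cs ! i" using nth_rotate[of 0 cs i] i by simp
    ultimately show "\<tau> i \<longleftrightarrow> reach (cs!i) (cs!((i + (?n - 1)) mod ?n))"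
      using i n4 by (simp add: nth_rotate \<tau>_def)
  qed
  have G_i: "\<And>i. i < ?n \<Longrightarrow> G (cs!i) (cs!((i+1) mod ?n))"
  proof -
    fix i assume i: "i < ?n"
    show "G (cs!i) (cs!((i+1) mod ?n))"
    proof (cases "i + 1 = ?n")
      case True
      then have "G (cs!0) (cs!i)" using adj0[OF ic, of i] n4 by auto
      then show ?thesis using True G_sym by simp
    next
      case False
      then show ?thesis using adjS[OF ic, of i] i by simp
    qed
  qed
  have step: "\<And>i. 0 < i \<Longrightarrow> i < ?n \<Longrightarrow> \<tau> i \<longleftrightarrow> \<not> \<tau> (i - 1)"
  proof -
    fix i assume i: "0 < i" "i < ?n"
    have e1: "(i + (?n - 1)) mod ?n = i - 1"
    proof -
      have a: "i + (?n - 1) = (i - 1) + ?n" using i by simp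
      have b: "i - 1 < ?n" using i by simp
      show ?thesis unfolding a mod_add_self2 using b by (rule mod_less)
    qed
    have e2: "((i - 1) + 1) mod ?n = i" using i by simp
    have "G (cs!(i-1)) (cs!i)" using G_i[of "i-1"] e2 i by simp
    then show "\<tau> i \<longleftrightarrow> \<not> \<tau> (i - 1)" using rot[OF i(2)] e1 e2 reach_xor by (simp add: \<tau>_def)
  qed
  have step0: "\<tau> 0 \<longleftrightarrow> \<not> \<tau> (?n - 1)"
  proof -
    have e1: "(0 + (?n - 1)) mod ?n = ?n - 1" using n4 by simp
    have "(?n - 1) + 1 = ?n" using n4 by simp
    then have e2: "((?n - 1) + 1) mod ?n = 0" by simp
    have "G (cs!(?n - 1)) (cs!0)" using G_i[of "?n - 1"] e2 n4 by simp
    moreover have "cs \<noteq> []" using n4 by (cases cs) auto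
    ultimately show ?thesis using rot[of 0] e1 e2 reach_xor n4 by (simp add: \<tau>_def)
  qed
  have ind: "\<And>i. i < ?n \<Longrightarrow> \<tau> i \<longleftrightarrow> (\<tau> 0 \<longleftrightarrow> even i)"
  proof -
    fix i show "i < ?n \<Longrightarrow> \<tau> i \<longleftrightarrow> (\<tau> 0 \<longleftrightarrow> even i)"
    proof (induction i)
      case 0 then show ?case by simp
    next
      case (Suc i)
      then show ?case using step[of "Suc i"] by simp
    qed
  qed
  have "\<tau> (?n - 1) \<longleftrightarrow> (\<tau> 0 \<longleftrightarrow> even (?n - 1))" using ind n4 by simp
  then have "odd (?n - 1)" using step0 by auto
  then show ?thesis using n4 by simp
qed

end



lemma distinct_nth_take_drop:
  assumes "distinct ws" "i < length ws"
  shows "ws!i \<notin> set (take i ws)" "ws!i \<notin> set (drop (Suc i) ws)"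
proof -
  have "distinct (take i ws @ ws!i # drop (Suc i) ws)" using assms id_take_nth_drop by metis
  then show "ws!i \<notin> set (take i ws)" "ws!i \<notin> set (drop (Suc i) ws)" by auto
qed

context ttree begin

lemma crossing_step:
  assumes "successively E ws" "q < length ws" "r < length ws" "ws!q \<in> side x y" "ws!r \<notin> side x y" "E x y"
  shows "\<exists>i. Suc i < length ws \<and> {ws!i, ws!Suc i} = {x,y}"
proof (cases "q < r")
  case True
  from ivt[of "\<lambda>v. v \<notin> side x y" "(!) ws" q r] True assms
  obtain i where i: "q \<le> i" "i < r" "ws!i \<in> side x y" "ws!Suc i \<notin> side x y" by auto
  have "E (ws!i) (ws!Suc i)" using successively_nth[OF assms(1)] i assms(3) by auto
  then have "ws!i = x \<and> ws!Suc i = y" using cross assms(6) i by blast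
  then show ?thesis using i assms(3) by (intro exI[of _ i]) auto
next
  case False
  then have "r < q" using assms by (metis linorder_neqE_nat)
  from ivt[of "\<lambda>v. v \<in> side x y" "(!) ws" r q] this assms
  obtain i where i: "r \<le> i" "i < q" "ws!i \<notin> side x y" "ws!Suc i \<in> side x y" by auto
  have "E (ws!i) (ws!Suc i)" using successively_nth[OF assms(1)] i assms(2) by auto
  then have "E (ws!Suc i) (ws!i)" by (rule E_sym)
  then have "ws!Suc i = x \<and> ws!i = y" using cross assms(6) i by blast
  then show ?thesis using i assms(2) by (intro exI[of _ i]) auto
qed

lemma end_sides:
  assumes "successively E ws" "distinct ws" "E x y" "Suc p < length ws" "{ws!p, ws!Suc p} = {x,y}"
  shows "(hd ws \<in> side x y \<longleftrightarrow> ws!p \<in> side x y) \<and> (last ws \<in> side x y \<longleftrightarrow> ws!Suc p \<in> side x y)"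
proof
  have ne: "ws \<noteq> []" using assms by auto
  have "ws!Suc p \<notin> set (take (Suc p) ws)" using distinct_nth_take_drop assms by blast
  moreover have "ws!Suc p \<in> {x,y}" using assms(5) by auto
  ultimately have nn: "\<not> (x \<in> set (take (Suc p) ws) \<and> y \<in> set (take (Suc p) ws))" by auto
  have "hd ws \<in> set (take (Suc p) ws)" using ne by (cases ws) auto
  moreover have "ws!p \<in> set (take (Suc p) ws)" using assms(4) by (simp add: take_Suc_conv_app_nth)
  ultimately show "hd ws \<in> side x y \<longleftrightarrow> ws!p \<in> side x y"
    using same_side[OF succ_take[OF assms(1)] assms(3) nn] by blast
next
  have "p < length ws" using assms(4) by simp
  then have "ws!p \<notin> set (drop (Suc p) ws)" using distinct_nth_take_drop(2) assms(2) by blast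
  moreover have "ws!p \<in> {x,y}" using assms(5) by auto
  ultimately have nn: "\<not> (x \<in> set (drop (Suc p) ws) \<and> y \<in> set (drop (Suc p) ws))" by auto
  have "last ws \<in> set (drop (Suc p) ws)" using assms(4)
    by (metis last_drop last_in_set drop_eq_Nil2 not_le)
  moreover have "ws!Suc p \<in> set (drop (Suc p) ws)" using assms(4)
    by (metis Cons_nth_drop_Suc list.set_intros(1))
  ultimately show "last ws \<in> side x y \<longleftrightarrow> ws!Suc p \<in> side x y"
    using same_side[OF succ_drop[OF assms(1)] assms(3) nn] by blast
qed

lemma SEP:
  assumes "successively E P" "successively E R" "set P \<inter> set R = {}"
  shows "successively E ps \<Longrightarrow> distinct ps \<Longrightarrow> ps \<noteq> [] \<Longrightarrow> hd ps \<in> set P \<Longrightarrow> last ps \<in> set R \<Longrightarrow>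
    \<exists>x y. E x y \<and> set P \<subseteq> side x y \<and> set R \<inter> side x y = {}"
proof (induction ps)
  case Nil then show ?case by simp
next
  case (Cons a ps)
  show ?case
  proof (cases "ps = []")
    case True then show ?thesis using Cons.prems assms(3) by auto
  next
    case ne: False
    show ?thesis
    proof (cases "hd ps \<in> set P")
      case True
      then show ?thesis using Cons ne by (auto simp: successively_Cons)
    next
      case False
      define y where "y = hd ps"
      have Eay: "E a y" using Cons.prems ne by (auto simp: successively_Cons y_def)
      have aP: "a \<in> set P" using Cons.prems by simp
      have anps: "a \<notin> set ps" using Cons.prems by simp
      have sps: "successively E ps" using Cons.prems ne by (auto simp: successively_Cons)
      have "set P \<subseteq> side a y"
      proof
        fix p assume "p \<in> set P"
        moreover have "\<not> (a \<in> set P \<and> y \<in> set P)" using False y_def by simp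
        ultimately show "p \<in> side a y" using same_side[OF assms(1) Eay _ aP] side_self by blast
      qed
      moreover have "set R \<inter> side a y = {}"
      proof -
        have yps: "y \<in> set ps" "last ps \<in> set ps" using ne y_def by auto
        have "\<not> (a \<in> set ps \<and> y \<in> set ps)" using anps by simp
        then have "last ps \<notin> side a y" using same_side[OF sps Eay _ yps(1) yps(2)] side_other[OF Eay] by blast
        moreover have lR: "last ps \<in> set R" using Cons.prems ne by simp
        moreover have "\<not> (a \<in> set R \<and> y \<in> set R)" using aP assms(3) by blast
        ultimately show ?thesis using same_side[OF assms(2) Eay _ lR] by blast
      qed
      ultimately show ?thesis using Eay by blast
    qed
  qed
qed


lemma CR:
  assumes "G u v" "E x y" "u \<in> side x y" "v \<notin> side x y"
  shows "\<exists>vs ts i. tw A lam vs ts \<and> Suc i < length vs \<and> {hd vs, last vs} = {u,v} \<and>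
    (vs!i, vs!Suc i) \<in> A \<and> {vs!i, vs!Suc i} = {x,y} \<and>
    (hd vs \<in> side x y \<longleftrightarrow> vs!i \<in> side x y) \<and> (last vs \<in> side x y \<longleftrightarrow> vs!Suc i \<in> side x y)"
proof -
  obtain vs ts where h: "tw A lam vs ts" "distinct vs" "length vs \<ge> 2"
    "(hd vs = u \<and> last vs = v) \<or> (hd vs = v \<and> last vs = u)"
    using G_path[OF assms(1)] by blast
  have ne: "vs \<noteq> []" using h by auto
  have ew: "successively E vs" using tw_Ewalk[OF h(1)] .
  have "u \<in> set vs" "v \<in> set vs" using h(4) ne by auto
  then obtain q r where q: "q < length vs" "vs!q = u" and r: "r < length vs" "vs!r = v"
    by (auto simp: in_set_conv_nth)
  obtain i where i: "Suc i < length vs" "{vs!i, vs!Suc i} = {x,y}"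
    using crossing_step[OF ew q(1) r(1) _ _ assms(2)] q r assms(3,4) by auto
  have arc: "(vs!i, vs!Suc i) \<in> A" using successively_nth[OF tw_dwalk[OF h(1)] i(1)] .
  have "{hd vs, last vs} = {u,v}" using h(4) by auto
  then show ?thesis using h(1) i arc end_sides[OF ew h(2) assms(2) i(1) i(2)] by blast
qed

lemma cycle6:
  assumes ic: "induced_cycle V G cs" and n6: "length cs \<ge> 6"
  shows False
proof -
  let ?n = "length cs"
  have cne: "cs \<noteq> []" using n6 by (cases cs) auto
  have dis: "distinct cs" and csV: "set cs \<subseteq> V" using ic by (auto simp: induced_cycle_def)
  have adj: "\<And>i j. i < ?n \<Longrightarrow> j < ?n \<Longrightarrow> i \<noteq> j \<Longrightarrow> G (cs!i) (cs!j) \<longleftrightarrow>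
     j = (if i + 1 = ?n then 0 else i + 1) \<or> i = (if j + 1 = ?n then 0 else j + 1)"
    using ic_adj'[OF ic] by blast
  have neq: "\<And>i j. i < ?n \<Longrightarrow> j < ?n \<Longrightarrow> cs!i = cs!j \<longleftrightarrow> i = j"
    using nth_eq_iff_index_eq[OF dis] by blast
  have G01: "G (cs!0) (cs!1)" using adj[of 0 1] n6 cne by simp
  have G34: "G (cs!3) (cs!4)" using adj[of 3 4] n6 cne by simp
  have nG: "\<And>u v. u \<in> {cs!0, cs!1} \<Longrightarrow> v \<in> {cs!3, cs!4} \<Longrightarrow> \<not> G u v \<and> \<not> G v u"
  proof -
    fix u v assume uv: "u \<in> {cs!0, cs!1}" "v \<in> {cs!3, cs!4}"
    have "\<not> G (cs!0) (cs!3)" using adj[of 0 3] n6 cne by simp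
    moreover have "\<not> G (cs!0) (cs!4)" using adj[of 0 4] n6 cne by simp
    moreover have "\<not> G (cs!1) (cs!3)" using adj[of 1 3] n6 cne by simp
    moreover have "\<not> G (cs!1) (cs!4)" using adj[of 1 4] n6 cne by simp
    ultimately show "\<not> G u v \<and> \<not> G v u" using uv G_sym by blast
  qed
  have "cs!0 \<noteq> cs!3" "cs!0 \<noteq> cs!4" "cs!1 \<noteq> cs!3" "cs!1 \<noteq> cs!4"
    using neq[of 0 3] neq[of 0 4] neq[of 1 3] neq[of 1 4] n6 cne by simp_all
  then have d01: "cs!0 \<notin> {cs!3, cs!4}" "cs!1 \<notin> {cs!3, cs!4}" by auto
  obtain vs0 ts0 where h0': "tw A lam vs0 ts0" "distinct vs0" "length vs0 \<ge> 2"
    "(hd vs0 = cs!0 \<and> last vs0 = cs!1) \<or> (hd vs0 = cs!1 \<and> last vs0 = cs!0)"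
    using G_path[OF G01] by blast
  then have h0: "tw A lam vs0 ts0" "distinct vs0" "length vs0 \<ge> 2"
    "{hd vs0, last vs0} = {cs!0, cs!1}" by auto
  obtain vs3 ts3 where h3': "tw A lam vs3 ts3" "distinct vs3" "length vs3 \<ge> 2"
    "(hd vs3 = cs!3 \<and> last vs3 = cs!4) \<or> (hd vs3 = cs!4 \<and> last vs3 = cs!3)"
    using G_path[OF G34] by blast
  then have h3: "tw A lam vs3 ts3" "distinct vs3" "length vs3 \<ge> 2"
    "{hd vs3, last vs3} = {cs!3, cs!4}" by auto
  have ne0: "vs0 \<noteq> []" and ne3: "vs3 \<noteq> []" using h0 h3 by auto
  have endp0: "hd vs0 \<in> {cs!0, cs!1}" "last vs0 \<in> {cs!0, cs!1}" using h0'(4) by auto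
  have endp3: "hd vs3 \<in> {cs!3, cs!4}" "last vs3 \<in> {cs!3, cs!4}" using h3'(4) by auto
  show False
  proof (cases "set vs0 \<inter> set vs3 = {}")
    case False
    then obtain m where m: "m \<in> set vs0" "m \<in> set vs3" by blast
    have m0: "m \<noteq> hd vs0 \<and> m \<noteq> last vs0"
    proof (rule ccontr)
      assume "\<not> (m \<noteq> hd vs0 \<and> m \<noteq> last vs0)"
      then have "m = hd vs0 \<or> m = last vs0" by simp
      then have mc: "m \<in> {cs!0, cs!1}" using endp0 by blast
      have "m \<noteq> hd vs3" "m \<noteq> last vs3" using mc endp3 d01 by auto
      from P1G[OF h3(1,2) m(2) this] have "G (hd vs3) m" by simp
      then show False using nG[OF mc endp3(1)] by simp
    qed
    have m3: "m \<noteq> hd vs3 \<and> m \<noteq> last vs3"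
    proof (rule ccontr)
      assume "\<not> (m \<noteq> hd vs3 \<and> m \<noteq> last vs3)"
      then have "m = hd vs3 \<or> m = last vs3" by simp
      then have mc: "m \<in> {cs!3, cs!4}" using endp3 by blast
      have "m \<noteq> hd vs0" "m \<noteq> last vs0" using mc endp0 d01 by auto
      from P1G[OF h0(1,2) m(1) this] have "G (hd vs0) m" by simp
      then show False using nG[OF endp0(1) mc] by simp
    qed
    obtain i where i: "i < length vs0" "vs0!i = m" using m(1) by (auto simp: in_set_conv_nth)
    obtain j where j: "j < length vs3" "vs3!j = m" using m(2) by (auto simp: in_set_conv_nth)
    have "Suc i < length vs0"
    proof (rule ccontr)
      assume "\<not> Suc i < length vs0"
      then have "i = length vs0 - 1" using i by simp
      then show False using m0 i ne0 by (simp add: last_conv_nth)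
    qed
    moreover have "Suc j < length vs3"
    proof (rule ccontr)
      assume "\<not> Suc j < length vs3"
      then have "j = length vs3 - 1" using j by simp
      then show False using m3 j ne3 by (simp add: last_conv_nth)
    qed
    ultimately have "reach (hd vs0) (last vs3) \<or> reach (hd vs3) (last vs0)"
      using splice[OF h0(1) h3(1)] i j by metis
    then have "G (hd vs0) (last vs3) \<or> G (hd vs3) (last vs0)" using G_iff by blast
    then show False using nG[OF endp0(1) endp3(2)] nG[OF endp0(2) endp3(1)] by blast
  next
    case True
    have "cs!1 \<in> set cs" "cs!4 \<in> set cs" using n6 by (auto intro!: nth_mem)
    then have c14V: "cs!1 \<in> V" "cs!4 \<in> V" using csV by blast+
    from path_rtrancl[OF connV[OF c14V]] obtain ps where ps: "ps \<noteq> []" "hd ps = cs!1" "last ps = cs!4"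
      "distinct ps" "successively (\<lambda>a b. (a, b) \<in> {(x, y). E x y}) ps" by blast
    have sps: "successively E ps" using ps(5) by (rule successively_mono) simp
    have hl0: "hd vs0 \<in> set vs0" "last vs0 \<in> set vs0" using ne0 by (rule hd_in_set, rule last_in_set)
    have hl3: "hd vs3 \<in> set vs3" "last vs3 \<in> set vs3" using ne3 by (rule hd_in_set, rule last_in_set)
    have cin: "cs!0 \<in> set vs0" "cs!1 \<in> set vs0" "cs!3 \<in> set vs3" "cs!4 \<in> set vs3"
      using h0'(4) h3'(4) hl0 hl3 by auto
    have "hd ps \<in> set vs0" "last ps \<in> set vs3" using ps(2,3) cin by simp_all
    then obtain x y where xy: "E x y" "set vs0 \<subseteq> side x y" "set vs3 \<inter> side x y = {}"
      using SEP[OF tw_Ewalk[OF h0(1)] tw_Ewalk[OF h3(1)] True sps ps(4) ps(1)] by blast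
    let ?S = "side x y"
    from cin have S: "cs!0 \<in> ?S" "cs!1 \<in> ?S" "cs!3 \<notin> ?S" "cs!4 \<notin> ?S" using xy by auto
    obtain a where a: "a = 1 \<or> a = 2" "cs!a \<in> ?S" "cs!(a+1) \<notin> ?S"
    proof (cases "cs!2 \<in> ?S")
      case True then show ?thesis using that[of 2] S by simp
    next
      case False then show ?thesis using that[of 1] S by (simp add: numeral_2_eq_2)
    qed
    define f where "f t = (if 4 + t < ?n then cs!(4+t) else cs!0)" for t
    have "f 0 \<notin> ?S" "f (?n - 4) \<in> ?S" using S n6 cne by (auto simp: f_def)
    then obtain t where t: "t < ?n - 4" "f t \<notin> ?S" "f (Suc t) \<in> ?S"
      using ivt[of "\<lambda>v. v \<in> ?S" f 0 "?n - 4"] by auto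
    define b where "b = 4 + t"
    define b' where "b' = (if b + 1 = ?n then 0 else b + 1)"
    have b: "4 \<le> b" "b < ?n" "cs!b \<notin> ?S" "cs!b' \<in> ?S" "b' < ?n"
      using t n6 cne by (auto simp: b_def b'_def f_def split: if_splits)
    have Ga: "G (cs!a) (cs!(a+1))" using adj[of a "a+1"] a n6 cne by auto
    have Gb: "G (cs!b') (cs!b)" using adj[of b' b] b n6 cne by (auto simp: b'_def)
    obtain vsa tsa i where qa: "tw A lam vsa tsa" "Suc i < length vsa" "{hd vsa, last vsa} = {cs!a, cs!(a+1)}"
      "(vsa!i, vsa!Suc i) \<in> A" "{vsa!i, vsa!Suc i} = {x,y}"
      "hd vsa \<in> ?S \<longleftrightarrow> vsa!i \<in> ?S" "last vsa \<in> ?S \<longleftrightarrow> vsa!Suc i \<in> ?S"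
      using CR[OF Ga xy(1) a(2,3)] by blast
    obtain vsb tsb j where qb: "tw A lam vsb tsb" "Suc j < length vsb" "{hd vsb, last vsb} = {cs!b', cs!b}"
      "(vsb!j, vsb!Suc j) \<in> A" "{vsb!j, vsb!Suc j} = {x,y}"
      "hd vsb \<in> ?S \<longleftrightarrow> vsb!j \<in> ?S" "last vsb \<in> ?S \<longleftrightarrow> vsb!Suc j \<in> ?S"
      using CR[OF Gb xy(1) b(4,3)] by blast
    have same: "vsa!i = vsb!j \<and> vsa!Suc i = vsb!Suc j"
    proof -
      have "(vsa!i = vsb!j \<and> vsa!Suc i = vsb!Suc j) \<or> (vsa!i = vsb!Suc j \<and> vsa!Suc i = vsb!j)"
        using qa(5) qb(5) by (auto simp: doubleton_eq_iff)
      then show ?thesis using qa(4) qb(4) asym by metis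
    qed
    have xS: "x \<in> ?S" "y \<notin> ?S" using side_self side_other[OF xy(1)] by auto
    have opp: "vsa!i \<in> ?S \<longleftrightarrow> vsa!Suc i \<notin> ?S" using qa(5) xS by (auto simp: doubleton_eq_iff)
    have "reach (hd vsa) (last vsb) \<or> reach (hd vsb) (last vsa)"
      using splice[OF qa(1) qb(1) qa(2) qb(2)] same by blast
    have an: "a < ?n" "a + 1 < ?n" "a \<noteq> b" "a + 1 \<noteq> b'" using a(1) b(1,2) n6 by (auto simp: b'_def)
    have nGab1: "\<not> G (cs!a) (cs!b)"
    proof
      assume "G (cs!a) (cs!b)"
      then have "b = (if a + 1 = ?n then 0 else a + 1) \<or> a = (if b + 1 = ?n then 0 else b + 1)"
        using adj[OF an(1) b(2) an(3)] by blast
      then show False using a(1) b(1,2) n6 by (auto split: if_splits)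
    qed
    have nGab2: "\<not> G (cs!(a+1)) (cs!b')"
    proof
      assume "G (cs!(a+1)) (cs!b')"
      then have "b' = (if a + 1 + 1 = ?n then 0 else a + 1 + 1) \<or> a + 1 = (if b' + 1 = ?n then 0 else b' + 1)"
        using adj[OF an(2) b(5) an(4)] by blast
      then show False using a(1) b(1,2) n6 unfolding b'_def by (auto split: if_splits)
    qed
    have nGab: "\<not> G (cs!a) (cs!b)" "\<not> G (cs!(a+1)) (cs!b')" using nGab1 nGab2 by auto
    have ea: "hd vsa \<in> {cs!a, cs!(a+1)}" "last vsa \<in> {cs!a, cs!(a+1)}" using qa(3) by auto
    have eb: "hd vsb \<in> {cs!b, cs!b'}" "last vsb \<in> {cs!b, cs!b'}" using qb(3) by auto
    have sides: "hd vsa \<in> ?S \<longleftrightarrow> last vsb \<notin> ?S" "hd vsb \<in> ?S \<longleftrightarrow> last vsa \<notin> ?S"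
      using qa(6,7) qb(6,7) same opp by auto
    have f4: "\<And>u v. G u v \<Longrightarrow> u \<in> {cs!a, cs!(a+1)} \<Longrightarrow> v \<in> {cs!b, cs!b'} \<Longrightarrow> (u \<in> ?S \<longleftrightarrow> v \<notin> ?S) \<Longrightarrow> False"
      using a(2,3) b(3,4) nGab by auto
    show False
    proof (cases "reach (hd vsa) (last vsb)")
      case True
      then have "G (hd vsa) (last vsb)" using G_iff by blast
      then show False using f4 ea(1) eb(2) sides(1) by blast
    next
      case False
      then have "reach (hd vsb) (last vsa)" using \<open>reach (hd vsa) (last vsb) \<or> reach (hd vsb) (last vsa)\<close> by blast
      then have "G (last vsa) (hd vsb)" using G_iff by blast
      then show False using f4 ea(2) eb(1) sides(2) by blast
    qed
  qed
qed

end



context ttree begin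

lemma coG:
  assumes co: "induced_cycle V (complement_graph G) cs" and ij: "i < length cs" "j < length cs" "i \<noteq> j"
  shows "G (cs!i) (cs!j) \<longleftrightarrow> \<not> (j = (if i + 1 = length cs then 0 else i + 1) \<or> i = (if j + 1 = length cs then 0 else j + 1))"
proof -
  have "distinct cs" using co by (simp add: induced_cycle_def)
  then have "cs!i \<noteq> cs!j" using ij by (simp add: nth_eq_iff_index_eq)
  then have "complement_graph G (cs!i) (cs!j) \<longleftrightarrow> \<not> G (cs!i) (cs!j)" by (simp add: complement_graph_def)
  then show ?thesis using ic_adj'[OF co ij] by blast
qed

lemma CHAIN0:
  assumes co: "induced_cycle V (complement_graph G) cs" and n6: "length cs \<ge> 6"
  shows "2 + k \<le> length cs - 2 \<Longrightarrow> reach (cs!0) (cs!(2+k)) \<longleftrightarrow> reach (cs!0) (cs!2)"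
proof (induction k)
  case 0 then show ?case by simp
next
  case (Suc k)
  let ?n = "length cs"
  have cne: "cs \<noteq> []" using n6 by (cases cs) auto
  have dis: "distinct cs" using co by (simp add: induced_cycle_def)
  define j where "j = 2 + k"
  have j: "2 \<le> j" "j + 1 \<le> ?n - 2" using Suc.prems by (auto simp: j_def)
  define vi where "vi = (if k = 0 then ?n - 1 else 1)"
  have vi: "vi < ?n" "vi \<noteq> 0" "vi \<noteq> j" "vi \<noteq> j + 1" using j n6 by (auto simp: vi_def j_def)
  have jn: "j < ?n" "j + 1 < ?n" "0 < ?n" using j n6 by auto
  have Gab: "G (cs!0) (cs!j)" using coG[OF co jn(3) jn(1)] j n6 by auto
  have Gad: "G (cs!0) (cs!(j+1))" using coG[OF co jn(3) jn(2)] j n6 by auto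
  have Gbv: "G (cs!j) (cs!vi)" using coG[OF co jn(1) vi(1)] vi j n6 by (auto simp: vi_def j_def)
  have Gvd: "G (cs!vi) (cs!(j+1))" using coG[OF co vi(1) jn(2)] vi j n6 by (auto simp: vi_def j_def)
  have nGav: "\<not> G (cs!0) (cs!vi)" using coG[OF co jn(3) vi(1)] vi j n6 by (auto simp: vi_def j_def)
  have neq: "cs!vi \<noteq> cs!0" "cs!j \<noteq> cs!0" "cs!(j+1) \<noteq> cs!0"
    using vi jn j dis by (auto simp: nth_eq_iff_index_eq)
  have "reach (cs!0) (cs!j) \<longleftrightarrow> reach (cs!0) (cs!(j+1))" by (rule LB4[OF Gab Gad Gbv Gvd nGav neq])
  then show ?case using Suc by (simp add: j_def)
qed

lemma CHAIN:
  assumes co: "induced_cycle V (complement_graph G) cs" and n6: "length cs \<ge> 6"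
    and "2 \<le> j" "j \<le> length cs - 2"
  shows "reach (cs!0) (cs!j) \<longleftrightarrow> reach (cs!0) (cs!2)"
proof -
  have e: "2 + (j - 2) = j" using assms by simp
  show ?thesis using CHAIN0[OF co n6, of "j - 2"] assms unfolding e by simp
qed

lemma co6:
  assumes co: "induced_cycle V (complement_graph G) cs" and n6: "length cs \<ge> 6"
  shows False
proof -
  let ?n = "length cs"
  have cne: "cs \<noteq> []" using n6 by (cases cs) auto
  have co2: "induced_cycle V (complement_graph G) (rotate 2 cs)" by (rule rot_ic[OF co])
  have co4: "induced_cycle V (complement_graph G) (rotate 4 cs)" by (rule rot_ic[OF co])
  have r2: "rotate 2 cs ! 0 = cs!2" "rotate 2 cs ! 2 = cs!4" "rotate 2 cs ! (?n - 2) = cs!0"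
  proof -
    show "rotate 2 cs ! 0 = cs!2" using nth_rotate[of 0 cs 2] n6 cne by simp
    show "rotate 2 cs ! 2 = cs!4" using nth_rotate[of 2 cs 2] n6 by simp
    have "2 + (?n - 2) = ?n" using n6 by simp
    then show "rotate 2 cs ! (?n - 2) = cs!0" using nth_rotate[of "?n - 2" cs 2] n6 by simp
  qed
  have r4: "rotate 4 cs ! 0 = cs!4" "rotate 4 cs ! (?n - 4) = cs!0" "rotate 4 cs ! (?n - 2) = cs!2"
  proof -
    show "rotate 4 cs ! 0 = cs!4" using nth_rotate[of 0 cs 4] n6 cne by simp
    have "4 + (?n - 4) = ?n" using n6 by simp
    then show "rotate 4 cs ! (?n - 4) = cs!0" using nth_rotate[of "?n - 4" cs 4] n6 by simp
    have e: "4 + (?n - 2) = 2 + ?n" using n6 by simp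
    have "(4 + (?n - 2)) mod ?n = 2 mod ?n" unfolding e by (rule mod_add_self2)
    then have "(4 + (?n - 2)) mod ?n = 2" using n6 by simp
    then show "rotate 4 cs ! (?n - 2) = cs!2" using nth_rotate[of "?n - 2" cs 4] n6 by simp
  qed
  have f1: "reach (cs!0) (cs!4) \<longleftrightarrow> reach (cs!0) (cs!2)" using CHAIN[OF co n6, of 4] n6 by simp
  have f2: "reach (cs!2) (cs!0) \<longleftrightarrow> reach (cs!2) (cs!4)"
    using CHAIN[OF co2 _, of "?n - 2"] n6 r2 by simp
  have f3a: "reach (cs!4) (cs!0) \<longleftrightarrow> reach (cs!4) (rotate 4 cs ! 2)"
    using CHAIN[OF co4 _, of "?n - 4"] n6 r4 by simp
  have f3b: "reach (cs!4) (cs!2) \<longleftrightarrow> reach (cs!4) (rotate 4 cs ! 2)"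
    using CHAIN[OF co4 _, of "?n - 2"] n6 r4 by simp
  have i: "0 < ?n" "2 < ?n" "4 < ?n" using n6 by auto
  have G02: "G (cs!0) (cs!2)" using coG[OF co i(1) i(2)] n6 by auto
  have G24: "G (cs!2) (cs!4)" using coG[OF co i(2) i(3)] n6 by auto
  have G04: "G (cs!0) (cs!4)" using coG[OF co i(1) i(3)] n6 by auto
  show False using f1 f2 f3a f3b reach_xor[OF G02] reach_xor[OF G24] reach_xor[OF G04] by blast
qed


lemma less5: "(i::nat) < 5 \<longleftrightarrow> i = 0 \<or> i = 1 \<or> i = 2 \<or> i = 3 \<or> i = 4" by auto

lemma co5:
  assumes co: "induced_cycle V (complement_graph G) cs" and n5: "length cs = 5"
  shows "induced_cycle V G [cs!0, cs!2, cs!4, cs!1, cs!3]"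
proof -
  have dis: "distinct cs" and csV: "set cs \<subseteq> V" using co by (auto simp: induced_cycle_def)
  have H: "\<And>(p::nat) (q::nat). p < 5 \<Longrightarrow> q < 5 \<Longrightarrow> p \<noteq> q \<Longrightarrow> G (cs!p) (cs!q) \<longleftrightarrow> \<not> (q = (p+1) mod 5 \<or> p = (q+1) mod 5)"
  proof -
    fix p q :: nat assume pq: "p < 5" "q < 5" "p \<noteq> q"
    then have "cs!p \<noteq> cs!q" using dis n5 by (simp add: nth_eq_iff_index_eq)
    then have "complement_graph G (cs!p) (cs!q) \<longleftrightarrow> \<not> G (cs!p) (cs!q)" by (simp add: complement_graph_def)
    moreover have "complement_graph G (cs!p) (cs!q) \<longleftrightarrow> q = (p+1) mod 5 \<or> p = (q+1) mod 5"
      using ic_adj[OF co] pq n5 by simp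
    ultimately show "G (cs!p) (cs!q) \<longleftrightarrow> \<not> (q = (p+1) mod 5 \<or> p = (q+1) mod 5)" by blast
  qed
  have N: "\<And>(p::nat) (q::nat). p < 5 \<Longrightarrow> q < 5 \<Longrightarrow> cs!p = cs!q \<longleftrightarrow> p = q" using dis n5 by (simp add: nth_eq_iff_index_eq)
  have g: "G (cs!0) (cs!2)" "G (cs!2) (cs!4)" "G (cs!4) (cs!1)" "G (cs!1) (cs!3)" "G (cs!3) (cs!0)"
    using H by auto
  have ng: "\<not> G (cs!0) (cs!4)" "\<not> G (cs!0) (cs!1)" "\<not> G (cs!2) (cs!1)" "\<not> G (cs!2) (cs!3)" "\<not> G (cs!4) (cs!3)"
    using H by auto
  have gs: "\<And>u v. G u v \<Longrightarrow> G v u" using G_sym by blast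
  show ?thesis unfolding induced_cycle_def
  proof (intro conjI allI impI)
    show "distinct [cs!0, cs!2, cs!4, cs!1, cs!3]" using N by auto
    show "set [cs!0, cs!2, cs!4, cs!1, cs!3] \<subseteq> V" using csV n5 by (auto intro!: nth_mem)
    fix i j assume ij: "i < length [cs!0, cs!2, cs!4, cs!1, cs!3]" "j < length [cs!0, cs!2, cs!4, cs!1, cs!3]" "i \<noteq> j"
    then have "i < 5" "j < 5" by auto
    then show "G ([cs!0, cs!2, cs!4, cs!1, cs!3] ! i) ([cs!0, cs!2, cs!4, cs!1, cs!3] ! j) \<longleftrightarrow>
       j = (i + 1) mod length [cs!0, cs!2, cs!4, cs!1, cs!3] \<or> i = (j + 1) mod length [cs!0, cs!2, cs!4, cs!1, cs!3]"
      using ij(3) g ng gs unfolding less5 by (elim disjE) auto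
  qed
qed

end

theorem mainTheorem13:
  fixes V :: "'a set" and A :: "('a \<times> 'a) set" and lam :: "'a \<times> 'a \<Rightarrow> nat set" and tmax :: nat
  assumes "temporal_digraph V A lam tmax"
    and "oriented_tree V A"
  shows "weakly_chordal V (conn_edge V A lam)"
proof -
  interpret ttree V A lam
  proof
    show "A \<subseteq> V \<times> V" using assms(2) by (simp add: oriented_tree_def)
    show "\<And>u v. (u, v) \<in> A \<Longrightarrow> (v, u) \<notin> A" using assms(2) by (simp add: oriented_tree_def)
    show "\<And>u v. und_adj A u v \<Longrightarrow> u \<noteq> v" using assms(2) by (simp add: oriented_tree_def is_und_tree_def)
    show "\<And>u v. u \<in> V \<Longrightarrow> v \<in> V \<Longrightarrow> (u, v) \<in> {(x, y). und_adj A x y}\<^sup>*"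
      using assms(2) by (simp add: oriented_tree_def is_und_tree_def)
    show "\<not> (\<exists>cs. 3 \<le> length cs \<and> distinct cs \<and> (\<forall>i<length cs. und_adj A (cs ! i) (cs ! ((i + 1) mod length cs))))"
      using assms(2) unfolding oriented_tree_def is_und_tree_def by blast
  qed
  have c1: "\<not> (\<exists>cs. length cs \<ge> 5 \<and> induced_cycle V (conn_edge V A lam) cs)"
  proof
    assume "\<exists>cs. length cs \<ge> 5 \<and> induced_cycle V (conn_edge V A lam) cs"
    then obtain cs where cs: "length cs \<ge> 5" "induced_cycle V (conn_edge V A lam) cs" by blast
    show False
    proof (cases "length cs \<ge> 6")
      case True then show False using cycle6[OF cs(2)] by blast
    next
      case False
      then have "length cs = 5" using cs by simp
      then show False using cycle_even[OF cs(2)] by simp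
    qed
  qed
  have c2: "\<not> (\<exists>cs. length cs \<ge> 5 \<and> induced_cycle V (complement_graph (conn_edge V A lam)) cs)"
  proof
    assume "\<exists>cs. length cs \<ge> 5 \<and> induced_cycle V (complement_graph (conn_edge V A lam)) cs"
    then obtain cs where cs: "length cs \<ge> 5" "induced_cycle V (complement_graph (conn_edge V A lam)) cs" by blast
    show False
    proof (cases "length cs \<ge> 6")
      case True then show False using co6[OF cs(2)] by blast
    next
      case False
      then have "length cs = 5" using cs by simp
      from co5[OF cs(2) this] have "induced_cycle V (conn_edge V A lam) [cs!0, cs!2, cs!4, cs!1, cs!3]" .
      then show False using cycle_even by fastforce
    qed
  qed
  show ?thesis unfolding weakly_chordal_def using c1 c2 by blast
qed


end
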